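(* Let $\mathcal{H} = (\mathbb{C}^2)^{\otimes k}$ be the space of $k = O(1)$ qubits and let $H = J\bigotimes_{i=1}^k Z_i$ with $J > 0$, where $Z_i$ is the Pauli $Z$ on qubit $i$. Suppose $(H',\mathcal{A})$ is an $(\eta,\epsilon)$-gadget for $H$, where $H'$ is a $k'$-local Hamiltonian with $k' < k$. Then, provided $\epsilon < 2^{-k'}J$, the gadget must satisfy $$\|H'\| \ge \frac{2^{-k'}J - \epsilon}{\eta} = \Omega(\eta^{-1}).$$
   Context: $\|\cdot\|$ is the operator norm. The ancillary space $\mathcal{A}$ is a tensor product of sites, and $H'$ being $k'$-local means $H'$ is a sum of terms each acting nontrivially on at most $k'$ sites among the $k$ qubits of $\mathcal{H}$ and the sites of $\mathcal{A}$. $(H',\mathcal{A})$ is an $(\eta,\epsilon)$-gadget for $H$ if there exist an orthogonal projector $P \ne 0$ on $\mathcal{A}$ and a unitary $U$ on $\mathcal{H}\otimes\mathcal{A}$ with $\|U - \mathbb{I}\| \le \eta$ and $\|P'H'P' - U(H\otimes P)U^\dagger\| \le \epsilon$, where $P' = U(\mathbb{I}\otimes P)U^\dagger$. *)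

theory Defs
  imports Complex_Main
begin

text \<open>
Finite-dimensional quantum systems built from sites 0,...,n-1; site i has local
dimension d i. Sites 0,...,k-1 are the k qubits of H (d i = 2), sites k,...,n-1
are the sites of the ancilla space A. A basis configuration is a function
c :: nat => nat with c i < d i for i < n and c i = 0 for i >= n; the total
Hilbert space is l2 of the finite set of configurations, i.e.
(C^2)^{tensor k} tensor A.
\<close>

type_synonym conf = "nat \<Rightarrow> nat"
type_synonym op = "conf \<Rightarrow> conf \<Rightarrow> complex"

definition confs :: "nat \<Rightarrow> (nat \<Rightarrow> nat) \<Rightarrow> conf set" where
  "confs n d = {c. (\<forall>i<n. c i < d i) \<and> (\<forall>i\<ge>n. c i = 0)}"

definition op_mul :: "conf set \<Rightarrow> op \<Rightarrow> op \<Rightarrow> op" where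
  "op_mul X A B = (\<lambda>c c'. \<Sum>e\<in>X. A c e * B e c')"

definition op_adj :: "op \<Rightarrow> op" where
  "op_adj A = (\<lambda>c c'. cnj (A c' c))"

definition op_id :: op where
  "op_id = (\<lambda>c c'. if c = c' then 1 else 0)"

definition op_diff :: "op \<Rightarrow> op \<Rightarrow> op" where
  "op_diff A B = (\<lambda>c c'. A c c' - B c c')"

definition op_eq :: "conf set \<Rightarrow> op \<Rightarrow> op \<Rightarrow> bool" where
  "op_eq X A B \<longleftrightarrow> (\<forall>c\<in>X. \<forall>c'\<in>X. A c c' = B c c')"

definition op_apply :: "conf set \<Rightarrow> op \<Rightarrow> (conf \<Rightarrow> complex) \<Rightarrow> (conf \<Rightarrow> complex)" where
  "op_apply X A v = (\<lambda>c. \<Sum>c'\<in>X. A c c' * v c')"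

definition vec_norm :: "conf set \<Rightarrow> (conf \<Rightarrow> complex) \<Rightarrow> real" where
  "vec_norm X v = sqrt (\<Sum>c\<in>X. (cmod (v c))\<^sup>2)"

definition op_norm :: "conf set \<Rightarrow> op \<Rightarrow> real" where
  "op_norm X A = Sup {vec_norm X (op_apply X A v) | v. vec_norm X v \<le> 1}"

definition op_hermitian :: "conf set \<Rightarrow> op \<Rightarrow> bool" where
  "op_hermitian X A \<longleftrightarrow> op_eq X (op_adj A) A"

definition op_unitary :: "conf set \<Rightarrow> op \<Rightarrow> bool" where
  "op_unitary X U \<longleftrightarrow> op_eq X (op_mul X U (op_adj U)) op_id \<and> op_eq X (op_mul X (op_adj U) U) op_id"

text \<open>A acts nontrivially only on the sites in S (S a subset of the sites {..<n}):
 A = A_S tensor identity on the remaining sites.\<close>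
definition acts_within :: "nat \<Rightarrow> (nat \<Rightarrow> nat) \<Rightarrow> nat set \<Rightarrow> op \<Rightarrow> bool" where
  "acts_within n d S A \<longleftrightarrow>
     (\<exists>f :: conf \<Rightarrow> conf \<Rightarrow> complex. \<forall>c\<in>confs n d. \<forall>c'\<in>confs n d.
        A c c' = (if (\<forall>i\<in>{..<n} - S. c i = c' i)
                  then f (\<lambda>i. if i \<in> S then c i else 0) (\<lambda>i. if i \<in> S then c' i else 0)
                  else 0))"

definition k_local_hamiltonian :: "nat \<Rightarrow> (nat \<Rightarrow> nat) \<Rightarrow> nat \<Rightarrow> op \<Rightarrow> bool" where
  "k_local_hamiltonian n d k' H \<longleftrightarrow>
     op_hermitian (confs n d) H \<and>
     (\<exists>(m::nat) (h::nat \<Rightarrow> op) (S::nat \<Rightarrow> nat set).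
        (\<forall>j<m. S j \<subseteq> {..<n} \<and> card (S j) \<le> k' \<and> acts_within n d (S j) (h j)) \<and>
        op_eq (confs n d) H (\<lambda>c c'. \<Sum>j<m. h j c c'))"

definition ancilla_projector :: "nat \<Rightarrow> (nat \<Rightarrow> nat) \<Rightarrow> nat \<Rightarrow> op \<Rightarrow> bool" where
  "ancilla_projector n d k P \<longleftrightarrow>
     acts_within n d {k..<n} P \<and>
     op_eq (confs n d) (op_mul (confs n d) P P) P \<and>
     op_hermitian (confs n d) P \<and>
     \<not> op_eq (confs n d) P (\<lambda>_ _. 0)"

text \<open>(H',A) is an (eta,epsilon)-gadget for H; here Hext = H tensor I_A, so that
 H tensor P = Hext * (I tensor P).\<close>
definition is_gadget :: "nat \<Rightarrow> (nat \<Rightarrow> nat) \<Rightarrow> nat \<Rightarrow> op \<Rightarrow> op \<Rightarrow> real \<Rightarrow> real \<Rightarrow> bool" where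
  "is_gadget n d k Hext H' \<eta> \<epsilon> \<longleftrightarrow>
     (let X = confs n d in
      \<exists>P U. ancilla_projector n d k P \<and> op_unitary X U \<and>
        op_norm X (op_diff U op_id) \<le> \<eta> \<and>
        (let P' = op_mul X (op_mul X U P) (op_adj U) in
         op_norm X (op_diff (op_mul X (op_mul X P' H') P')
                            (op_mul X (op_mul X U (op_mul X Hext P)) (op_adj U))) \<le> \<epsilon>))"

text \<open>H = J Z_1 tensor ... tensor Z_k on the k qubits (sites 0..k-1), extended by the
 identity on the ancilla; Z|0> = |0>, Z|1> = -|1>.\<close>
definition ZZ_ham :: "nat \<Rightarrow> real \<Rightarrow> op" where
  "ZZ_ham k J = (\<lambda>c c'. if c = c' then complex_of_real (J * (\<Prod>i<k. if c i = 0 then 1 else -1)) else 0)"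

end

theory Submission
  imports Defs "HOL-Analysis.L2_Norm" "HOL-Library.FuncSet"
begin

definition inner_c :: "conf set \<Rightarrow> (conf \<Rightarrow> complex) \<Rightarrow> (conf \<Rightarrow> complex) \<Rightarrow> complex" where
  "inner_c X u w = (\<Sum>c\<in>X. cnj (u c) * w c)"

lemma ap_mul: "op_apply X (op_mul X A B) v = op_apply X A (op_apply X B v)"
  unfolding op_apply_def op_mul_def
  by (auto simp: sum_distrib_left sum_distrib_right mult.assoc intro!: ext sum.swap[THEN trans])

lemma ap_adj: "inner_c X u (op_apply X A w) = inner_c X (op_apply X (op_adj A) u) w"
  unfolding inner_c_def op_apply_def op_adj_def
  by (auto simp: sum_distrib_left sum_distrib_right mult_ac intro!: sum.swap[THEN trans])

lemma ap_cong: "(\<And>c. c \<in> X \<Longrightarrow> v c = w c) \<Longrightarrow> op_apply X A v = op_apply X A w"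
  unfolding op_apply_def by (auto intro!: ext sum.cong)

lemma inner_cong: "(\<And>c. c \<in> X \<Longrightarrow> u c = u' c) \<Longrightarrow> (\<And>c. c \<in> X \<Longrightarrow> v c = w c) \<Longrightarrow> inner_c X u v = inner_c X u' w"
  unfolding inner_c_def by (auto intro!: sum.cong)

lemma ap_id: "finite X \<Longrightarrow> c \<in> X \<Longrightarrow> op_apply X op_id v c = v c"
proof -
  assume "finite X" "c \<in> X"
  have "(\<lambda>c'. (if c = c' then 1 else 0) * v c') = (\<lambda>c'. if c = c' then v c' else 0)" by auto
  then have "op_apply X op_id v c = (\<Sum>c'\<in>X. if c = c' then v c' else 0)"
    unfolding op_apply_def op_id_def by (intro sum.cong) auto
  then show ?thesis using \<open>finite X\<close> \<open>c \<in> X\<close> by simp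
qed

lemma ap_diff: "op_apply X (op_diff A B) v c = op_apply X A v c - op_apply X B v c"
  unfolding op_apply_def op_diff_def by (simp add: left_diff_distrib sum_subtractf)

lemma ap_eq: "op_eq X A B \<Longrightarrow> c \<in> X \<Longrightarrow> op_apply X A v c = op_apply X B v c"
  unfolding op_apply_def op_eq_def by (auto intro!: sum.cong)

lemma adj_adj[simp]: "op_adj (op_adj U) = U"
  unfolding op_adj_def by auto

lemma unit_left: "finite X \<Longrightarrow> op_unitary X U \<Longrightarrow> c \<in> X \<Longrightarrow> op_apply X (op_adj U) (op_apply X U v) c = v c"
  unfolding op_unitary_def by (metis ap_mul ap_eq ap_id)

lemma ap_lin_diff: "op_apply X A (\<lambda>c. v c - w c) c = op_apply X A v c - op_apply X A w c"
  unfolding op_apply_def by (simp add: right_diff_distrib sum_subtractf)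

lemma inner_diff_right: "inner_c X u (\<lambda>c. v c - w c) = inner_c X u v - inner_c X u w"
  unfolding inner_c_def by (simp add: right_diff_distrib sum_subtractf)

lemma inner_diff_left: "inner_c X (\<lambda>c. v c - w c) u = inner_c X v u - inner_c X w u"
  unfolding inner_c_def by (simp add: left_diff_distrib sum_subtractf)

lemma vec_norm_L2: "vec_norm X v = L2_set (\<lambda>c. cmod (v c)) X"
  unfolding vec_norm_def L2_set_def by simp

lemma vec_norm_nonneg: "vec_norm X v \<ge> 0"
  unfolding vec_norm_def by (simp add: sum_nonneg)

lemma inner_self: "inner_c X v v = of_real ((vec_norm X v)^2)"
proof -
  have "inner_c X v v = (\<Sum>c\<in>X. of_real ((cmod (v c))^2))"
    unfolding inner_c_def by (intro sum.cong refl) (metis complex_norm_square mult.commute)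
  also have "\<dots> = of_real (\<Sum>c\<in>X. (cmod (v c))^2)" by simp
  also have "\<dots> = of_real ((vec_norm X v)^2)" unfolding vec_norm_def by (simp add: sum_nonneg)
  finally show ?thesis .
qed

lemma cauchy: "cmod (inner_c X u w) \<le> vec_norm X u * vec_norm X w"
proof -
  have "cmod (inner_c X u w) \<le> (\<Sum>c\<in>X. cmod (cnj (u c) * w c))"
    unfolding inner_c_def by (rule norm_sum)
  also have "\<dots> = (\<Sum>c\<in>X. \<bar>cmod (u c)\<bar> * \<bar>cmod (w c)\<bar>)" by (simp add: norm_mult)
  also have "\<dots> \<le> vec_norm X u * vec_norm X w" unfolding vec_norm_L2 by (rule L2_set_mult_ineq)
  finally show ?thesis .
qed

lemma finite_confs: "finite (confs n d)"
proof -
  have "confs n d \<subseteq> (\<lambda>f i. if i < n then f i else 0) ` (PiE {..<n} (\<lambda>i. {..<d i}))"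
  proof
    fix c assume c: "c \<in> confs n d"
    have "c = (\<lambda>i. if i < n then restrict c {..<n} i else 0)"
      using c unfolding confs_def by (auto intro!: ext)
    moreover have "restrict c {..<n} \<in> PiE {..<n} (\<lambda>i. {..<d i})"
      using c unfolding confs_def by auto
    ultimately show "c \<in> (\<lambda>f i. if i < n then f i else 0) ` (PiE {..<n} (\<lambda>i. {..<d i}))"
      by blast
  qed
  moreover have "finite (PiE {..<n} (\<lambda>i. {..<d i}))" by (intro finite_PiE) auto
  ultimately show ?thesis using finite_subset by blast
qed

lemma vec_norm_scale: "vec_norm X (\<lambda>c. a * v c) = cmod a * vec_norm X v"
  unfolding vec_norm_L2 by (simp add: norm_mult L2_set_right_distrib)

lemma ap_scale: "op_apply X A (\<lambda>c. a * v c) = (\<lambda>c. a * op_apply X A v c)"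
  unfolding op_apply_def by (auto simp: sum_distrib_left mult_ac intro!: ext)

lemma vec_norm_le_sum: "vec_norm X w \<le> (\<Sum>c\<in>X. cmod (w c))"
  unfolding vec_norm_L2 by (rule L2_set_le_sum) auto

lemma opn_bdd: assumes "finite X"
  shows "bdd_above {vec_norm X (op_apply X A v) | v. vec_norm X v \<le> 1}"
proof (rule bdd_aboveI)
  fix y assume "y \<in> {vec_norm X (op_apply X A v) | v. vec_norm X v \<le> 1}"
  then obtain v where v: "vec_norm X v \<le> 1" and y: "y = vec_norm X (op_apply X A v)" by auto
  have "y \<le> (\<Sum>c\<in>X. cmod (op_apply X A v c))" using y vec_norm_le_sum by simp
  also have "\<dots> \<le> (\<Sum>c\<in>X. \<Sum>c'\<in>X. cmod (A c c'))"
  proof (rule sum_mono)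
    fix c assume "c \<in> X"
    have "cmod (op_apply X A v c) \<le> (\<Sum>c'\<in>X. cmod (A c c' * v c'))"
      unfolding op_apply_def by (rule norm_sum)
    also have "\<dots> \<le> (\<Sum>c'\<in>X. cmod (A c c'))"
    proof (rule sum_mono)
      fix c' assume "c' \<in> X"
      have "cmod (v c') \<le> vec_norm X v" unfolding vec_norm_L2
        using assms \<open>c' \<in> X\<close> by (rule member_le_L2_set)
      then have "cmod (v c') \<le> 1" using v by simp
      then show "cmod (A c c' * v c') \<le> cmod (A c c')"
        by (simp add: norm_mult mult_left_le)
    qed
    finally show "cmod (op_apply X A v c) \<le> (\<Sum>c'\<in>X. cmod (A c c'))" .
  qed
  finally show "y \<le> (\<Sum>c\<in>X. \<Sum>c'\<in>X. cmod (A c c'))" .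
qed

lemma opn_upper: "finite X \<Longrightarrow> vec_norm X v \<le> 1 \<Longrightarrow> vec_norm X (op_apply X A v) \<le> op_norm X A"
  unfolding op_norm_def by (rule cSup_upper) (auto intro: opn_bdd)

lemma vec_norm_zero: "vec_norm X (\<lambda>c. 0) = 0"
  unfolding vec_norm_def by simp

lemma opn_nonneg: assumes "finite X" shows "0 \<le> op_norm X A"
proof -
  have "vec_norm X (op_apply X A (\<lambda>c. 0)) \<le> op_norm X A"
    using assms by (intro opn_upper) (simp_all add: vec_norm_zero)
  moreover have "op_apply X A (\<lambda>c. 0) = (\<lambda>c. 0)" unfolding op_apply_def by simp
  ultimately show ?thesis by (simp add: vec_norm_zero)
qed

lemma opn_bound: assumes "finite X"
  shows "vec_norm X (op_apply X A v) \<le> op_norm X A * vec_norm X v"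
proof (cases "vec_norm X v = 0")
  case True
  then have "(\<Sum>c\<in>X. (cmod (v c))\<^sup>2) = 0" unfolding vec_norm_def by simp
  then have "\<forall>c\<in>X. (cmod (v c))\<^sup>2 = 0" using assms by (subst (asm) sum_nonneg_eq_0_iff) auto
  then have "op_apply X A v = op_apply X A (\<lambda>c. 0)" by (intro ap_cong) simp
  also have "\<dots> = (\<lambda>c. 0)" unfolding op_apply_def by simp
  finally show ?thesis using True by (simp add: vec_norm_zero)
next
  case False
  define t where "t = vec_norm X v"
  have t: "t > 0" using False vec_norm_nonneg t_def by (metis less_eq_real_def)
  have "vec_norm X (\<lambda>c. complex_of_real (1/t) * v c) = 1"
    using t unfolding vec_norm_scale by (simp add: t_def[symmetric] norm_divide)
  then have "vec_norm X (op_apply X A (\<lambda>c. complex_of_real (1/t) * v c)) \<le> op_norm X A"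
    using assms by (intro opn_upper) auto
  then have "(1/t) * vec_norm X (op_apply X A v) \<le> op_norm X A"
    using t unfolding ap_scale vec_norm_scale by (simp add: norm_divide)
  then show ?thesis using t unfolding t_def[symmetric] by (simp add: field_simps)
qed


definition flip :: "nat \<Rightarrow> conf \<Rightarrow> conf" where
  "flip i a = a(i := 1 - a i)"

lemma flip_confs: "i < n \<Longrightarrow> d i = 2 \<Longrightarrow> a \<in> confs n d \<Longrightarrow> flip i a \<in> confs n d"
  unfolding confs_def flip_def by auto

lemma flip_flip: "i < n \<Longrightarrow> d i = 2 \<Longrightarrow> a \<in> confs n d \<Longrightarrow> flip i (flip i a) = a"
  unfolding confs_def flip_def by (auto intro!: ext)

lemma acts_flip:
  assumes "acts_within n d S A" "i < n" "i \<notin> S" "d i = 2" "a \<in> confs n d" "b \<in> confs n d"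
  shows "A (flip i a) (flip i b) = A a b"
proof -
  obtain f where f: "\<forall>c\<in>confs n d. \<forall>c'\<in>confs n d.
        A c c' = (if (\<forall>i\<in>{..<n} - S. c i = c' i)
                  then f (\<lambda>i. if i \<in> S then c i else 0) (\<lambda>i. if i \<in> S then c' i else 0)
                  else 0)" using assms(1) unfolding acts_within_def by blast
  have fa: "flip i a \<in> confs n d" "flip i b \<in> confs n d" using assms flip_confs by auto
  have r1: "(\<lambda>j. if j \<in> S then flip i a j else 0) = (\<lambda>j. if j \<in> S then a j else 0)"
    "(\<lambda>j. if j \<in> S then flip i b j else 0) = (\<lambda>j. if j \<in> S then b j else 0)"
    using assms(3) unfolding flip_def by (auto intro!: ext)
  have ai: "a i < 2" "b i < 2" using assms(2,4,5,6) unfolding confs_def by auto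
  have "\<And>j. (flip i a j = flip i b j) = (a j = b j)"
    using ai unfolding flip_def by auto
  then have "(\<forall>j\<in>{..<n} - S. flip i a j = flip i b j) = (\<forall>j\<in>{..<n} - S. a j = b j)"
    by simp
  then show ?thesis using f fa assms(5,6) r1 by simp
qed

lemma acts_support:
  assumes "acts_within n d S A" "a \<in> confs n d" "b \<in> confs n d" "A a b \<noteq> 0"
  shows "\<forall>j\<in>{..<n} - S. a j = b j"
  using assms unfolding acts_within_def by (metis (no_types, lifting))

lemma acts_diag_same:
  assumes "acts_within n d S A" "a \<in> confs n d" "b \<in> confs n d" "\<forall>j\<in>S. a j = b j"
  shows "A a a = A b b"
proof -
  obtain f where f: "\<forall>c\<in>confs n d. \<forall>c'\<in>confs n d.
        A c c' = (if (\<forall>i\<in>{..<n} - S. c i = c' i)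
                  then f (\<lambda>i. if i \<in> S then c i else 0) (\<lambda>i. if i \<in> S then c' i else 0)
                  else 0)" using assms(1) unfolding acts_within_def by blast
  have "(\<lambda>i. if i \<in> S then a i else 0) = (\<lambda>i. if i \<in> S then b i else 0)"
    using assms(4) by (auto intro!: ext)
  then show ?thesis using f assms(2,3) by simp
qed

lemma acts_empty:
  assumes "acts_within n d {} A"
  shows "\<exists>l. \<forall>a\<in>confs n d. \<forall>b\<in>confs n d. A a b = (if a = b then l else 0)"
proof -
  obtain f where f: "\<forall>c\<in>confs n d. \<forall>c'\<in>confs n d.
        A c c' = (if (\<forall>i\<in>{..<n} - {}. c i = c' i)
                  then f (\<lambda>i. if i \<in> {} then c i else 0) (\<lambda>i. if i \<in> {} then c' i else 0)
                  else 0)" using assms(1) unfolding acts_within_def by blast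
  have "\<forall>a\<in>confs n d. \<forall>b\<in>confs n d. (\<forall>i\<in>{..<n} - {}. a i = b i) = (a = b)"
    unfolding confs_def by (auto intro!: ext) (metis lessThan_iff not_le)
  then show ?thesis using f by (intro exI[of _ "f (\<lambda>i. 0) (\<lambda>i. 0)"]) auto
qed

definition zsign :: "nat \<Rightarrow> conf \<Rightarrow> real" where
  "zsign k c = (\<Prod>i<k. if c i = 0 then 1 else -1)"

lemma zsign_flip: assumes "i < k" "c i < 2" shows "zsign k (flip i c) = - zsign k c"
proof -
  have "zsign k (flip i c) = (if flip i c i = 0 then 1 else -1) * (\<Prod>j\<in>{..<k}-{i}. if flip i c j = 0 then 1 else -1)"
    unfolding zsign_def using assms(1) by (subst prod.remove[of _ i]) auto
  also have "(\<Prod>j\<in>{..<k}-{i}. if flip i c j = 0 then 1 else -1) = (\<Prod>j\<in>{..<k}-{i}. if c j = 0 then 1 else (-1::real))"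
    unfolding flip_def by (intro prod.cong) auto
  also have "zsign k c = (if c i = 0 then 1 else -1) * (\<Prod>j\<in>{..<k}-{i}. if c j = 0 then 1 else -1)"
    unfolding zsign_def using assms(1) by (subst prod.remove[of _ i]) auto
  moreover have "flip i c i = 0 \<longleftrightarrow> c i \<noteq> 0" using assms(2) unfolding flip_def by auto
  ultimately show ?thesis by auto
qed

lemma zsign_sq: "zsign k c * zsign k c = 1"
  unfolding zsign_def prod.distrib[symmetric] by (intro prod.neutral) auto

lemma sum_antisym:
  assumes "\<forall>c\<in>C. f c \<in> C \<and> f (f c) = c" "\<forall>c\<in>C. g (f c) = - g c"
  shows "sum g C = (0::complex)"
proof -
  have "sum g C = sum (\<lambda>c. g (f c)) C"
    by (rule sum.reindex_bij_witness[of _ f f]) (use assms in auto)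
  also have "\<dots> = - sum g C" using assms(2) by (simp add: sum_negf)
  finally show ?thesis by simp
qed


lemma herm_ap: "op_hermitian X P \<Longrightarrow> a \<in> X \<Longrightarrow> op_apply X (op_adj P) v a = op_apply X P v a"
  unfolding op_hermitian_def by (rule ap_eq)

lemma vec_norm_cong: "(\<And>c. c \<in> X \<Longrightarrow> u c = w c) \<Longrightarrow> vec_norm X u = vec_norm X w"
  unfolding vec_norm_def by (simp cong: sum.cong)

lemma ap_sum: "op_apply X (\<lambda>a b. \<Sum>j<m. h j a b) v a = (\<Sum>j<m. op_apply X (h j) v a)"
  unfolding op_apply_def by (simp add: sum_distrib_right sum.swap[of _ "{..<m}"])

lemma inner_sum_right: "inner_c X u (\<lambda>a. \<Sum>j<m. w j a) = (\<Sum>j<m. inner_c X u (w j))"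
  unfolding inner_c_def by (simp add: sum_distrib_left sum.swap[of _ "{..<m}"])

lemma inner_scale_right: "inner_c X u (\<lambda>a. l * w a) = l * inner_c X u w"
  unfolding inner_c_def by (simp add: sum_distrib_left mult_ac)

lemma ap_ZZ: "finite X \<Longrightarrow> a \<in> X \<Longrightarrow> op_apply X (ZZ_ham k J) w a = of_real (J * zsign k a) * w a"
proof -
  assume "finite X" "a \<in> X"
  have "op_apply X (ZZ_ham k J) w a = (\<Sum>b\<in>X. if a = b then of_real (J * zsign k a) * w b else 0)"
    unfolding op_apply_def ZZ_ham_def zsign_def by (intro sum.cong) auto
  then show ?thesis using \<open>finite X\<close> \<open>a \<in> X\<close> by simp
qed

lemma key:
  assumes X: "finite X" and U: "op_unitary X U" and P: "op_hermitian X P"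
    and Pv: "\<forall>a\<in>X. op_apply X P v a = v a"
    and P'def: "P' = op_mul X (op_mul X U P) (op_adj U)" and xdef: "x = op_apply X U v"
  shows "op_apply X P' x = x"
    and "inner_c X x (op_apply X P' y) = inner_c X x y"
    and "inner_c X x (op_apply X (op_mul X (op_mul X U (op_mul X B P)) (op_adj U)) x)
         = inner_c X v (op_apply X B v)"
    and "inner_c X x x = inner_c X v v"
proof -
  have Uinv: "\<forall>a\<in>X. op_apply X (op_adj U) x a = v a" using unit_left[OF X U] xdef by simp
  have apP': "op_apply X P' w = op_apply X U (op_apply X P (op_apply X (op_adj U) w))" for w
    unfolding P'def by (simp add: ap_mul)
  have PUx: "op_apply X P (op_apply X (op_adj U) x) = op_apply X P v"
    using Uinv by (intro ap_cong) auto
  moreover have "op_apply X U (op_apply X P v) = op_apply X U v"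
    using Pv by (intro ap_cong) auto
  ultimately show "op_apply X P' x = x" using apP' xdef by simp
  have "inner_c X x (op_apply X P' y)
      = inner_c X (op_apply X (op_adj U) x) (op_apply X P (op_apply X (op_adj U) y))"
    by (simp add: apP' ap_adj)
  also have "\<dots> = inner_c X v (op_apply X P (op_apply X (op_adj U) y))"
    using Uinv by (intro inner_cong) auto
  also have "\<dots> = inner_c X (op_apply X (op_adj P) v) (op_apply X (op_adj U) y)"
    by (simp add: ap_adj)
  also have "\<dots> = inner_c X v (op_apply X (op_adj U) y)"
    using Pv herm_ap[OF P] by (intro inner_cong) auto
  also have "\<dots> = inner_c X x y" by (simp add: ap_adj xdef)
  finally show "inner_c X x (op_apply X P' y) = inner_c X x y" .
  have "inner_c X x (op_apply X (op_mul X (op_mul X U (op_mul X B P)) (op_adj U)) x)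
      = inner_c X (op_apply X (op_adj U) x) (op_apply X B (op_apply X P (op_apply X (op_adj U) x)))"
    by (simp add: ap_mul ap_adj)
  also have "\<dots> = inner_c X v (op_apply X B (op_apply X P v))"
    using Uinv PUx by (intro inner_cong) auto
  also have "op_apply X B (op_apply X P v) = op_apply X B v"
    using Pv by (intro ap_cong) auto
  finally show "inner_c X x (op_apply X (op_mul X (op_mul X U (op_mul X B P)) (op_adj U)) x)
         = inner_c X v (op_apply X B v)" .
  have "inner_c X x x = inner_c X (op_apply X (op_adj U) x) v" by (simp add: xdef ap_adj)
  also have "\<dots> = inner_c X v v" using Uinv by (intro inner_cong) auto
  finally show "inner_c X x x = inner_c X v v" .
qed


lemma G_flip:
  assumes "acts_within n d T A" "acts_within n d T' B" "i < n" "i \<notin> T" "i \<notin> T'" "d i = 2"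
    "c \<in> confs n d"
  shows "inner_c (confs n d) (\<lambda>a. B a (flip i c)) (op_apply (confs n d) A (\<lambda>a. B a (flip i c)))
       = inner_c (confs n d) (\<lambda>a. B a c) (op_apply (confs n d) A (\<lambda>a. B a c))"
proof -
  let ?X = "confs n d" and ?f = "flip i"
  have fX: "\<forall>a\<in>?X. ?f a \<in> ?X \<and> ?f (?f a) = a" using assms flip_confs flip_flip by blast
  define g where "g a = cnj (B a (?f c)) * (\<Sum>b\<in>?X. A a b * B b (?f c))" for a
  have "inner_c ?X (\<lambda>a. B a (?f c)) (op_apply ?X A (\<lambda>a. B a (?f c))) = sum g ?X"
    unfolding inner_c_def op_apply_def g_def by simp
  also have "\<dots> = sum (\<lambda>a. g (?f a)) ?X"
    by (rule sum.reindex_bij_witness[of _ ?f ?f]) (use fX in auto)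
  also have "\<dots> = (\<Sum>a\<in>?X. cnj (B a c) * (\<Sum>b\<in>?X. A a b * B b c))"
  proof (rule sum.cong[OF refl])
    fix a assume a: "a \<in> ?X"
    have "(\<Sum>b\<in>?X. A (?f a) b * B b (?f c)) = (\<Sum>b\<in>?X. A (?f a) (?f b) * B (?f b) (?f c))"
      by (rule sum.reindex_bij_witness[of _ ?f ?f]) (use fX in auto)
    also have "\<dots> = (\<Sum>b\<in>?X. A a b * B b c)"
      using acts_flip[OF assms(1,3,4,6)] acts_flip[OF assms(2,3,5,6)] a assms(7) by (intro sum.cong) auto
    finally show "g (?f a) = cnj (B a c) * (\<Sum>b\<in>?X. A a b * B b c)"
      unfolding g_def using acts_flip[OF assms(2,3,5,6)] a assms(7) by simp
  qed
  also have "\<dots> = inner_c ?X (\<lambda>a. B a c) (op_apply ?X A (\<lambda>a. B a c))"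
    unfolding inner_c_def op_apply_def by simp
  finally show ?thesis .
qed


theorem theorem3p3:
  fixes n k k' :: nat and d :: "nat \<Rightarrow> nat" and J \<eta> \<epsilon> :: real and H' :: op
  assumes "k \<le> n"
    and "\<forall>i<k. d i = 2"
    and "\<forall>i. k \<le> i \<and> i < n \<longrightarrow> d i \<ge> 1"
    and "J > 0"
    and "k' < k"
    and "k_local_hamiltonian n d k' H'"
    and "is_gadget n d k (ZZ_ham k J) H' \<eta> \<epsilon>"
    and "\<epsilon> < J / 2 ^ k'"
  shows "\<eta> * op_norm (confs n d) H' \<ge> J / 2 ^ k' - \<epsilon>
         \<and> op_norm (confs n d) H' \<ge> (J / 2 ^ k' - \<epsilon>) / \<eta>"
proof -
  define X where "X = confs n d"
  have X: "finite X" unfolding X_def by (rule finite_confs)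
  obtain m :: nat and h :: "nat \<Rightarrow> op" and S :: "nat \<Rightarrow> nat set" where hS: "\<forall>j<m. S j \<subseteq> {..<n} \<and> card (S j) \<le> k' \<and> acts_within n d (S j) (h j)"
    and Hsum: "op_eq X H' (\<lambda>c c'. \<Sum>j<m. h j c c')"
    using assms(6) unfolding k_local_hamiltonian_def X_def by blast
  obtain P U where Pa: "ancilla_projector n d k P" and U: "op_unitary X U"
    and Ueta: "op_norm X (op_diff U op_id) \<le> \<eta>"
    and Meps: "op_norm X (op_diff (op_mul X (op_mul X (op_mul X (op_mul X U P) (op_adj U)) H') (op_mul X (op_mul X U P) (op_adj U)))
                            (op_mul X (op_mul X U (op_mul X (ZZ_ham k J) P)) (op_adj U))) \<le> \<epsilon>"
    using assms(7) unfolding is_gadget_def Let_def X_def by blast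
  define P' where "P' = op_mul X (op_mul X U P) (op_adj U)"
  define A1 where "A1 = op_mul X (op_mul X P' H') P'"
  define A2 where "A2 = op_mul X (op_mul X U (op_mul X (ZZ_ham k J) P)) (op_adj U)"
  define M where "M = op_diff A1 A2"
  have Meps': "op_norm X M \<le> \<epsilon>" using Meps unfolding M_def A1_def A2_def P'_def .
  have PA: "acts_within n d {k..<n} P" and PP: "op_eq X (op_mul X P P) P"
    and PH: "op_hermitian X P" and Pnz: "\<not> op_eq X P (\<lambda>_ _. 0)"
    using Pa unfolding ancilla_projector_def X_def by auto
  obtain c1 c0 where c1: "c1 \<in> X" and c0: "c0 \<in> X" and P10: "P c1 c0 \<noteq> 0"
    using Pnz unfolding op_eq_def by auto
  define N where "N = op_norm X H'"
  have N0: "N \<ge> 0" unfolding N_def using X by (rule opn_nonneg)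
  have eta0: "\<eta> \<ge> 0" using opn_nonneg[OF X] Ueta order_trans by blast
  have eps0: "\<epsilon> \<ge> 0" using opn_nonneg[OF X] Meps' order_trans by blast
  define V where "V c = (\<lambda>a. P a c)" for c
  have PV: "\<forall>a\<in>X. op_apply X P (V c) a = V c a" if "c \<in> X" for c
    using PP that unfolding op_apply_def op_mul_def V_def op_eq_def by auto
  have innV: "inner_c X (V c) (V c) = P c c" if "c \<in> X" for c
  proof -
    have "inner_c X (V c) (V c) = (\<Sum>a\<in>X. P c a * P a c)"
      unfolding inner_c_def V_def
      using PH that unfolding op_hermitian_def op_eq_def op_adj_def by (intro sum.cong) auto
    also have "\<dots> = P c c" using PP that unfolding op_eq_def op_mul_def by auto
    finally show ?thesis .
  qed
  define C0 where "C0 = {c\<in>X. \<forall>i\<ge>k. c i = c0 i}"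
  have c0C0: "c0 \<in> C0" using c0 unfolding C0_def by auto
  have C0X: "C0 \<subseteq> X" unfolding C0_def by auto
  have finC0: "finite C0" using X C0X finite_subset by blast
  have diag: "P c c = P c0 c0" if "c \<in> C0" for c
  proof -
    have a: "c \<in> confs n d" "\<forall>j\<in>{k..<n}. c j = c0 j" using that unfolding C0_def X_def by auto
    have b: "c0 \<in> confs n d" using c0 unfolding X_def .
    show ?thesis by (rule acts_diag_same[OF PA a(1) b a(2)])
  qed
  define p where "p = (vec_norm X (V c0))^2"
  have p0: "p > 0"
  proof -
    have "(cmod (V c0 c1))^2 \<le> (\<Sum>a\<in>X. (cmod (V c0 a))^2)"
      using X c1 by (intro member_le_sum) auto
    moreover have "(cmod (V c0 c1))^2 > 0" using P10 unfolding V_def by simp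
    ultimately have "(\<Sum>a\<in>X. (cmod (V c0 a))^2) > 0" by linarith
    moreover have "p = (\<Sum>a\<in>X. (cmod (V c0 a))^2)" unfolding p_def vec_norm_def by (simp add: sum_nonneg)
    ultimately show ?thesis by simp
  qed
  have innC0: "inner_c X (V c) (V c) = of_real p" if "c \<in> C0" for c
  proof -
    have "c \<in> X" using that C0X by auto
    then have "inner_c X (V c) (V c) = inner_c X (V c0) (V c0)"
      using innV[of c] innV[OF c0] diag[OF that] by simp
    then show ?thesis using inner_self[of X "V c0"] unfolding p_def by simp
  qed
  have normC0: "vec_norm X (V c) = sqrt p" if "c \<in> C0" for c
  proof -
    have "(vec_norm X (V c))^2 = p" using innC0[OF that] inner_self[of X "V c"] of_real_eq_iff by metis
    then show ?thesis using vec_norm_nonneg by (metis real_sqrt_unique)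
  qed
  have HV: "inner_c X (V c) (op_apply X (ZZ_ham k J) (V c)) = of_real (J * zsign k c) * inner_c X (V c) (V c)"
    if cX: "c \<in> X" for c
  proof -
    have "inner_c X (V c) (op_apply X (ZZ_ham k J) (V c)) = (\<Sum>a\<in>X. cnj (V c a) * (of_real (J * zsign k a) * V c a))"
      unfolding inner_c_def using ap_ZZ[OF X] by (intro sum.cong) auto
    also have "\<dots> = (\<Sum>a\<in>X. of_real (J * zsign k c) * (cnj (V c a) * V c a))"
    proof (rule sum.cong[OF refl])
      fix a assume aX: "a \<in> X"
      show "cnj (V c a) * (of_real (J * zsign k a) * V c a) = of_real (J * zsign k c) * (cnj (V c a) * V c a)"
      proof (cases "P a c = 0")
        case True then show ?thesis unfolding V_def by simp
      next
        case False
        then have "\<forall>j\<in>{..<n} - {k..<n}. a j = c j"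
          using acts_support[OF PA] aX cX unfolding X_def by blast
        then have "\<forall>j<k. a j = c j" using assms(1) by auto
        then have "zsign k a = zsign k c" unfolding zsign_def by (intro prod.cong) auto
        then show ?thesis by simp
      qed
    qed
    also have "\<dots> = of_real (J * zsign k c) * inner_c X (V c) (V c)"
      unfolding inner_c_def by (simp add: sum_distrib_left)
    finally show ?thesis .
  qed
  define F where "F c = inner_c X (V c) (op_apply X H' (V c))" for c
  define x where "x c = op_apply X U (V c)" for c
  define \<delta> where "\<delta> c = inner_c X (x c) (op_apply X H' (x c)) - F c" for c
  have core: "J * p \<le> \<epsilon> * p + zsign k c * Re (F c) + cmod (\<delta> c)" if cC0: "c \<in> C0" for c
  proof -
    have cX: "c \<in> X" using cC0 C0X by auto
    note kk = key[OF X U PH PV[OF cX] P'_def x_def]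
    define Q where "Q = inner_c X (x c) (op_apply X M (x c))"
    have "op_apply X M (x c) = (\<lambda>a. op_apply X A1 (x c) a - op_apply X A2 (x c) a)"
      unfolding M_def by (intro ext ap_diff)
    then have "Q = inner_c X (x c) (op_apply X A1 (x c)) - inner_c X (x c) (op_apply X A2 (x c))"
      unfolding Q_def by (simp add: inner_diff_right)
    also have "inner_c X (x c) (op_apply X A1 (x c)) = inner_c X (x c) (op_apply X H' (x c))"
      unfolding A1_def by (simp add: ap_mul kk(1,2))
    also have "inner_c X (x c) (op_apply X A2 (x c)) = of_real (J * zsign k c) * of_real p"
      unfolding A2_def using kk(3) HV[OF cX] innC0[OF cC0] by simp
    finally have Qeq: "Q = F c + \<delta> c - of_real (J * zsign k c * p)"
      unfolding \<delta>_def by simp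
    have xn: "vec_norm X (x c) = sqrt p"
    proof -
      have "(vec_norm X (x c))^2 = p"
        using kk(4) innC0[OF cC0] inner_self[of X "x c"] of_real_eq_iff by metis
      then show ?thesis using vec_norm_nonneg by (metis real_sqrt_unique)
    qed
    have "cmod Q \<le> vec_norm X (x c) * vec_norm X (op_apply X M (x c))"
      unfolding Q_def by (rule cauchy)
    also have "\<dots> \<le> vec_norm X (x c) * (op_norm X M * vec_norm X (x c))"
      by (intro mult_left_mono opn_bound X vec_norm_nonneg)
    also have "\<dots> \<le> vec_norm X (x c) * (\<epsilon> * vec_norm X (x c))"
      by (intro mult_left_mono mult_right_mono Meps' vec_norm_nonneg)
    also have "\<dots> = \<epsilon> * p" using xn p0 by simp
    finally have Qb: "cmod Q \<le> \<epsilon> * p" .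
    have zz: "zsign k c * zsign k c = 1" by (rule zsign_sq)
    have zpm: "zsign k c = 1 \<or> zsign k c = -1" using zz square_eq_1_iff by blast
    have "zsign k c * Re Q = zsign k c * Re (F c) + zsign k c * Re (\<delta> c) - J * p"
    proof -
      have ReQ: "Re Q = Re (F c) + Re (\<delta> c) - J * zsign k c * p" using Qeq by simp
      have "zsign k c * Re Q = zsign k c * Re (F c) + zsign k c * Re (\<delta> c) - J * (zsign k c * zsign k c) * p"
        by (simp only: ReQ) (simp add: algebra_simps)
      then show ?thesis using zz by simp
    qed
    moreover have "\<bar>zsign k c * Re Q\<bar> \<le> cmod Q"
    proof -
      have "\<bar>zsign k c\<bar> = 1" using zpm by auto
      then show ?thesis by (simp add: abs_mult abs_Re_le_cmod)
    qed
    moreover have "zsign k c * Re (\<delta> c) \<le> cmod (\<delta> c)"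
    proof -
      have "\<bar>zsign k c\<bar> = 1" using zpm by auto
      then have "\<bar>zsign k c * Re (\<delta> c)\<bar> \<le> cmod (\<delta> c)" by (simp add: abs_mult abs_Re_le_cmod)
      then show ?thesis by linarith
    qed
    ultimately show ?thesis using Qb by linarith
  qed
  have xn: "vec_norm X (x c) = sqrt p" if cC0: "c \<in> C0" for c
  proof -
    have cX: "c \<in> X" using cC0 C0X by auto
    note kk = key[OF X U PH PV[OF cX] P'_def x_def]
    have "(vec_norm X (x c))^2 = p"
      using kk(4) innC0[OF cC0] inner_self[of X "x c"] of_real_eq_iff by metis
    then show ?thesis using vec_norm_nonneg by (metis real_sqrt_unique)
  qed
  have dbound: "cmod (\<delta> c) \<le> 2 * \<eta> * N * p" if cC0: "c \<in> C0" for c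
  proof -
    have cX: "c \<in> X" using cC0 C0X by auto
    define e where "e = (\<lambda>a. x c a - V c a)"
    have He: "op_apply X H' e = (\<lambda>a. op_apply X H' (x c) a - op_apply X H' (V c) a)"
      unfolding e_def by (intro ext ap_lin_diff)
    have deq: "\<delta> c = inner_c X (x c) (op_apply X H' e) + inner_c X e (op_apply X H' (V c))"
      unfolding He \<delta>_def F_def inner_diff_right by (simp add: e_def inner_diff_left)
    have "vec_norm X e = vec_norm X (op_apply X (op_diff U op_id) (V c))"
      by (intro vec_norm_cong) (simp add: e_def ap_diff ap_id[OF X] x_def)
    also have "\<dots> \<le> op_norm X (op_diff U op_id) * vec_norm X (V c)" by (rule opn_bound[OF X])
    also have "\<dots> \<le> \<eta> * sqrt p" unfolding normC0[OF cC0] using Ueta p0 by (intro mult_right_mono) auto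
    finally have ne: "vec_norm X e \<le> \<eta> * sqrt p" .
    have "cmod (inner_c X (x c) (op_apply X H' e)) \<le> vec_norm X (x c) * vec_norm X (op_apply X H' e)"
      by (rule cauchy)
    also have "\<dots> \<le> vec_norm X (x c) * (N * vec_norm X e)"
      unfolding N_def by (intro mult_left_mono opn_bound X vec_norm_nonneg)
    also have "\<dots> \<le> sqrt p * (N * (\<eta> * sqrt p))"
      unfolding xn[OF cC0] by (intro mult_left_mono ne N0 real_sqrt_ge_zero p0[THEN less_imp_le])
    finally have b1: "cmod (inner_c X (x c) (op_apply X H' e)) \<le> sqrt p * (N * (\<eta> * sqrt p))" .
    have "cmod (inner_c X e (op_apply X H' (V c))) \<le> vec_norm X e * vec_norm X (op_apply X H' (V c))"
      by (rule cauchy)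
    also have "\<dots> \<le> vec_norm X e * (N * vec_norm X (V c))"
      unfolding N_def by (intro mult_left_mono opn_bound X vec_norm_nonneg)
    also have "\<dots> \<le> (\<eta> * sqrt p) * (N * sqrt p)"
      unfolding normC0[OF cC0] using N0 p0 by (intro mult_right_mono ne) auto
    finally have b2: "cmod (inner_c X e (op_apply X H' (V c))) \<le> (\<eta> * sqrt p) * (N * sqrt p)" .
    have sp: "sqrt p * sqrt p = p" using p0 by simp
    have "cmod (\<delta> c) \<le> cmod (inner_c X (x c) (op_apply X H' e)) + cmod (inner_c X e (op_apply X H' (V c)))"
      unfolding deq by (rule norm_triangle_ineq)
    also have "\<dots> \<le> sqrt p * (N * (\<eta> * sqrt p)) + (\<eta> * sqrt p) * (N * sqrt p)" using b1 b2 by linarith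
    also have "\<dots> = 2 * \<eta> * N * (sqrt p * sqrt p)" by (simp add: algebra_simps)
    finally show ?thesis using sp by simp
  qed
  have dzero: "\<delta> c = 0" if k0: "k' = 0" and cC0: "c \<in> C0" for c
  proof -
    have cX: "c \<in> X" using cC0 C0X by auto
    note kk = key[OF X U PH PV[OF cX] P'_def x_def]
    have "\<forall>j. \<exists>l. j < m \<longrightarrow> (\<forall>a\<in>X. \<forall>b\<in>X. h j a b = (if a = b then l else 0))"
    proof (intro allI)
      fix j
      show "\<exists>l. j < m \<longrightarrow> (\<forall>a\<in>X. \<forall>b\<in>X. h j a b = (if a = b then l else 0))"
      proof (cases "j < m")
        case True
        then have "S j \<subseteq> {..<n}" "card (S j) \<le> 0" "acts_within n d (S j) (h j)" using hS k0 by auto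
        then have "S j = {}" "acts_within n d (S j) (h j)" using finite_subset[of "S j" "{..<n}"] by auto
        then show ?thesis using acts_empty unfolding X_def by metis
      qed simp
    qed
    then obtain L where L: "\<forall>j. j < m \<longrightarrow> (\<forall>a\<in>X. \<forall>b\<in>X. h j a b = (if a = b then L j else 0))"
      by metis
    have apH: "op_apply X H' w a = (\<Sum>j<m. L j) * w a" if aX: "a \<in> X" for w a
    proof -
      have "op_apply X H' w a = (\<Sum>j<m. op_apply X (h j) w a)"
        by (subst ap_eq[OF Hsum aX]) (rule ap_sum)
      also have "\<dots> = (\<Sum>j<m. L j * w a)"
      proof (rule sum.cong[OF refl])
        fix j assume "j \<in> {..<m}"
        then have "op_apply X (h j) w a = (\<Sum>b\<in>X. if a = b then L j * w b else 0)"
          unfolding op_apply_def using L aX by (intro sum.cong) auto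
        then show "op_apply X (h j) w a = L j * w a" using X aX by simp
      qed
      finally show ?thesis by (simp add: sum_distrib_right)
    qed
    have "inner_c X (x c) (op_apply X H' (x c)) = inner_c X (x c) (\<lambda>a. (\<Sum>j<m. L j) * x c a)"
      using apH by (intro inner_cong) auto
    also have "\<dots> = (\<Sum>j<m. L j) * inner_c X (V c) (V c)" by (simp add: inner_scale_right kk(4))
    also have "\<dots> = inner_c X (V c) (\<lambda>a. (\<Sum>j<m. L j) * V c a)" by (simp add: inner_scale_right)
    also have "\<dots> = F c" unfolding F_def using apH by (intro inner_cong) auto
    finally show ?thesis unfolding \<delta>_def by simp
  qed
  have Fsum: "F c = (\<Sum>j<m. inner_c X (V c) (op_apply X (h j) (V c)))" if cX: "c \<in> X" for c
  proof -
    have "F c = inner_c X (V c) (\<lambda>a. \<Sum>j<m. op_apply X (h j) (V c) a)"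
      unfolding F_def by (intro inner_cong refl, subst ap_eq[OF Hsum], assumption, rule ap_sum)
    then show ?thesis by (simp add: inner_sum_right)
  qed
  have Gj: "(\<Sum>c\<in>C0. of_real (zsign k c) * inner_c X (V c) (op_apply X (h j) (V c))) = 0" if jm: "j < m" for j
  proof -
    have Sj: "S j \<subseteq> {..<n}" "card (S j) \<le> k'" "acts_within n d (S j) (h j)" using hS jm by auto
    obtain i where i: "i < k" "i \<notin> S j"
    proof (rule ccontr)
      assume "\<not> thesis"
      then have "{..<k} \<subseteq> S j" using that by blast
      then have "card {..<k} \<le> card (S j)" using Sj(1) finite_subset[of "S j" "{..<n}"] by (intro card_mono) auto
      then show False using Sj(2) assms(5) by simp
    qed
    have in_: "i < n" using i assms(1) by simp
    have di: "d i = 2" using i assms(2) by simp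
    show ?thesis
    proof (rule sum_antisym[of _ "flip i"])
      show "\<forall>c\<in>C0. flip i c \<in> C0 \<and> flip i (flip i c) = c"
      proof
        fix c assume cC0: "c \<in> C0"
        then have cc: "c \<in> confs n d" using C0X X_def by auto
        have "flip i c \<in> X" using flip_confs[OF in_ di cc] X_def by simp
        moreover have "\<forall>i'\<ge>k. flip i c i' = c0 i'" using cC0 i(1) unfolding C0_def flip_def by auto
        ultimately show "flip i c \<in> C0 \<and> flip i (flip i c) = c"
          unfolding C0_def using flip_flip[OF in_ di cc] by simp
      qed
      show "\<forall>c\<in>C0. of_real (zsign k (flip i c)) * inner_c X (V (flip i c)) (op_apply X (h j) (V (flip i c)))
              = - (of_real (zsign k c) * inner_c X (V c) (op_apply X (h j) (V c)))"
      proof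
        fix c assume cC0: "c \<in> C0"
        then have cc: "c \<in> confs n d" using C0X X_def by auto
        have "c i < 2" using cc di in_ unfolding confs_def by auto
        then have z: "zsign k (flip i c) = - zsign k c" using zsign_flip i(1) by blast
        have "inner_c X (V (flip i c)) (op_apply X (h j) (V (flip i c))) = inner_c X (V c) (op_apply X (h j) (V c))"
          unfolding V_def X_def using G_flip[OF Sj(3) PA in_ i(2) _ di cc] i(1) by simp
        then show "of_real (zsign k (flip i c)) * inner_c X (V (flip i c)) (op_apply X (h j) (V (flip i c)))
              = - (of_real (zsign k c) * inner_c X (V c) (op_apply X (h j) (V c)))" using z by simp
      qed
    qed
  qed
  have sumF: "(\<Sum>c\<in>C0. of_real (zsign k c) * F c) = 0"
  proof -
    have "(\<Sum>c\<in>C0. of_real (zsign k c) * F c)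
        = (\<Sum>c\<in>C0. \<Sum>j<m. of_real (zsign k c) * inner_c X (V c) (op_apply X (h j) (V c)))"
      using Fsum C0X by (intro sum.cong) (auto simp: sum_distrib_left)
    also have "\<dots> = (\<Sum>j<m. \<Sum>c\<in>C0. of_real (zsign k c) * inner_c X (V c) (op_apply X (h j) (V c)))"
      by (rule sum.swap)
    also have "\<dots> = 0" using Gj by simp
    finally show ?thesis .
  qed
  obtain c where cC0: "c \<in> C0" and cneg: "zsign k c * Re (F c) \<le> 0"
  proof (rule ccontr)
    assume "\<not> thesis"
    then have pos: "\<forall>c\<in>C0. zsign k c * Re (F c) > 0" using that by force
    have "(\<Sum>c\<in>C0. zsign k c * Re (F c)) > 0"
      using pos finC0 c0C0 by (intro sum_pos) auto
    moreover have "Re (\<Sum>c\<in>C0. of_real (zsign k c) * F c) = (\<Sum>c\<in>C0. zsign k c * Re (F c))"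
      by (simp add: Re_sum)
    ultimately show False using sumF by simp
  qed
  have main: "J * p \<le> \<epsilon> * p + cmod (\<delta> c)" using core[OF cC0] cneg by linarith
  have k1: "k' \<ge> 1"
  proof (rule ccontr)
    assume "\<not> k' \<ge> 1"
    then have "k' = 0" by simp
    then have "J * p \<le> \<epsilon> * p" using main dzero[OF _ cC0] by simp
    then have "J \<le> \<epsilon>" using p0 by simp
    then show False using assms(8) \<open>k' = 0\<close> by simp
  qed
  have "J * p \<le> \<epsilon> * p + 2 * \<eta> * N * p" using main dbound[OF cC0] by linarith
  then have "(J - \<epsilon> - 2 * \<eta> * N) * p \<le> 0" by (simp add: algebra_simps)
  then have JN: "J - \<epsilon> - 2 * \<eta> * N \<le> 0" using p0 by (simp add: mult_le_0_iff)
  have "(2::real) ^ 1 \<le> 2 ^ k'" using k1 by (intro power_increasing) auto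
  then have "J / 2 ^ k' \<le> J / 2" using assms(4) by (intro divide_left_mono) auto
  then have c1': "\<eta> * N \<ge> J / 2 ^ k' - \<epsilon>" using JN eps0 by linarith
  moreover have "J / 2 ^ k' - \<epsilon> > 0" using assms(8) by simp
  ultimately have "\<eta> * N > 0" by linarith
  then have "\<eta> > 0" using eta0 N0 by (metis less_eq_real_def mult_zero_left)
  then have "N \<ge> (J / 2 ^ k' - \<epsilon>) / \<eta>" using c1' by (simp add: pos_divide_le_eq mult.commute)
  then show ?thesis using c1' unfolding N_def X_def by simp
qed

end
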